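(* Let $\epsilon>0$ and let $D$ be a properly totally coloured digraph on at least $2\epsilon^{-2}$ vertices with rainbow vertex set. Let $v\in V(D)$ and let $\delta^+=\min\{d^+(x): d^{\mathrm{rb}}(v,x)\leq\epsilon^{-1}\}$. Then there is a set $N\subseteq V(D)$ such that $d^{\mathrm{rb}}(v,u)\leq\epsilon^{-1}$ for every $u\in N$ and $\delta^+(D[N])\geq\delta^+-2\epsilon|D|$.
   Context: Digraphs are finite, without loops and without multiple edges (an edge may appear in both directions). A path is a sequence of distinct vertices with consecutive vertices joined by directed edges; its length is its number of edges. A total colouring assigns colours to vertices and edges; it is proper if outgoing edges at any vertex have distinct colours, ingoing edges at any vertex have distinct colours, adjacent vertices have distinct colours, and every edge has a colour different from both its endpoints. $D$ has rainbow vertex set if all vertices have distinct colours. A path is rainbow if all its vertices and edges have pairwise distinct colours. $d^{\mathrm{rb}}(u,x)$ is the length of a shortest rainbow path from $u$ to $x$. $d^+(x)$ is the out-degree of $x$, $D[N]$ the induced subdigraph, $\delta^+$ the minimum out-degree, $|D|$ the number of vertices. *)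

theory Defs
  imports Main "HOL-Library.Extended_Nat"
begin

definition digraph :: "'a set \<Rightarrow> ('a \<times> 'a) set \<Rightarrow> bool" where
  "digraph V E \<longleftrightarrow> finite V \<and> E \<subseteq> V \<times> V \<and> (\<forall>x. (x, x) \<notin> E)"

definition proper_total_colouring ::
  "'a set \<Rightarrow> ('a \<times> 'a) set \<Rightarrow> ('a \<Rightarrow> 'c) \<Rightarrow> ('a \<times> 'a \<Rightarrow> 'c) \<Rightarrow> bool" where
  "proper_total_colouring V E cv ce \<longleftrightarrow>
     (\<forall>x y z. (x, y) \<in> E \<and> (x, z) \<in> E \<and> y \<noteq> z \<longrightarrow> ce (x, y) \<noteq> ce (x, z)) \<and>
     (\<forall>x y z. (y, x) \<in> E \<and> (z, x) \<in> E \<and> y \<noteq> z \<longrightarrow> ce (y, x) \<noteq> ce (z, x)) \<and>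
     (\<forall>x y. (x, y) \<in> E \<longrightarrow> cv x \<noteq> cv y) \<and>
     (\<forall>x y. (x, y) \<in> E \<longrightarrow> ce (x, y) \<noteq> cv x \<and> ce (x, y) \<noteq> cv y)"

definition rainbow_vertex_set :: "'a set \<Rightarrow> ('a \<Rightarrow> 'c) \<Rightarrow> bool" where
  "rainbow_vertex_set V cv \<longleftrightarrow> inj_on cv V"

definition is_path :: "'a set \<Rightarrow> ('a \<times> 'a) set \<Rightarrow> 'a list \<Rightarrow> 'a \<Rightarrow> 'a \<Rightarrow> bool" where
  "is_path V E p u x \<longleftrightarrow> p \<noteq> [] \<and> distinct p \<and> set p \<subseteq> V \<and> hd p = u \<and> last p = x \<and>
     (\<forall>i. Suc i < length p \<longrightarrow> (p ! i, p ! Suc i) \<in> E)"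

definition path_edges :: "'a list \<Rightarrow> ('a \<times> 'a) list" where
  "path_edges p = zip p (tl p)"

definition path_length :: "'a list \<Rightarrow> nat" where
  "path_length p = length p - 1"

definition rainbow_path :: "('a \<Rightarrow> 'c) \<Rightarrow> ('a \<times> 'a \<Rightarrow> 'c) \<Rightarrow> 'a list \<Rightarrow> bool" where
  "rainbow_path cv ce p \<longleftrightarrow> distinct (map cv p @ map ce (path_edges p))"

text \<open>Rainbow distance: length of a shortest rainbow path (\<infinity> if none).\<close>
definition rb_dist ::
  "'a set \<Rightarrow> ('a \<times> 'a) set \<Rightarrow> ('a \<Rightarrow> 'c) \<Rightarrow> ('a \<times> 'a \<Rightarrow> 'c) \<Rightarrow> 'a \<Rightarrow> 'a \<Rightarrow> enat" where
  "rb_dist V E cv ce u x =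
     Inf {enat (path_length p) | p. is_path V E p u x \<and> rainbow_path cv ce p}"

definition rb_dist_le ::
  "'a set \<Rightarrow> ('a \<times> 'a) set \<Rightarrow> ('a \<Rightarrow> 'c) \<Rightarrow> ('a \<times> 'a \<Rightarrow> 'c) \<Rightarrow> 'a \<Rightarrow> 'a \<Rightarrow> real \<Rightarrow> bool" where
  "rb_dist_le V E cv ce u x r \<longleftrightarrow> (\<exists>n. rb_dist V E cv ce u x = enat n \<and> real n \<le> r)"

definition out_degree :: "('a \<times> 'a) set \<Rightarrow> 'a \<Rightarrow> nat" where
  "out_degree E x = card {y. (x, y) \<in> E}"

text \<open>Minimum out-degree of the induced subdigraph D[N] (for nonempty N).\<close>
definition min_out_degree_induced :: "('a \<times> 'a) set \<Rightarrow> 'a set \<Rightarrow> nat" where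
  "min_out_degree_induced E N = Min ((\<lambda>x. card {y \<in> N. (x, y) \<in> E}) ` N)"

end

theory Submission
  imports Defs
begin

lemma rb_dist_le_path:
  assumes "is_path V E p u x" "rainbow_path cv ce p"
  shows "rb_dist V E cv ce u x \<le> enat (path_length p)"
  unfolding rb_dist_def using assms by (auto intro!: Inf_lower)

lemma rb_dist_obtain:
  assumes "rb_dist V E cv ce u x \<le> enat i"
  shows "\<exists>p. is_path V E p u x \<and> rainbow_path cv ce p \<and> path_length p \<le> i"
proof -
  let ?A = "{enat (path_length p) | p. is_path V E p u x \<and> rainbow_path cv ce p}"
  have ne: "?A \<noteq> {}"
  proof
    assume "?A = {}"
    then have "Inf ?A = \<infinity>" by (simp only:, simp add: Inf_enat_def)
    then have "rb_dist V E cv ce u x = \<infinity>" unfolding rb_dist_def .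
    then show False using assms by simp
  qed
  then have "Inf ?A \<in> ?A" unfolding Inf_enat_def by (auto intro: LeastI)
  then obtain p where p: "is_path V E p u x" "rainbow_path cv ce p" "rb_dist V E cv ce u x = enat (path_length p)"
    unfolding rb_dist_def by auto
  then show ?thesis using assms by auto
qed

lemma path_edges_take: "path_edges (take m p) = take (m - 1) (path_edges p)"
  unfolding path_edges_def by (rule nth_equalityI) (auto simp: nth_tl)

lemma prefix_path:
  assumes "is_path V E p u x" "rainbow_path cv ce p" "y \<in> set p"
  shows "\<exists>q. is_path V E q u y \<and> rainbow_path cv ce q \<and> path_length q \<le> path_length p"
proof -
  obtain j where j: "j < length p" "p ! j = y" using assms(3) by (auto simp: in_set_conv_nth)
  define q where "q = take (Suc j) p"
  have "is_path V E q u y"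
    using assms(1) j unfolding is_path_def q_def
    apply (auto simp: hd_take last_conv_nth min_def dest: in_set_takeD)
    apply (subgoal_tac "j = length p - Suc 0", simp, linarith)
    done
  moreover have "rainbow_path cv ce q"
  proof -
    have d: "distinct (map cv p @ map ce (path_edges p))" using assms(2) unfolding rainbow_path_def .
    have "map cv q @ map ce (path_edges q) = take (Suc j) (map cv p) @ take j (map ce (path_edges p))"
      unfolding q_def path_edges_take by (simp add: take_map)
    moreover have "distinct (take (Suc j) (map cv p) @ take j (map ce (path_edges p)))"
      using d set_take_subset[of "Suc j" "map cv p"] set_take_subset[of j "map ce (path_edges p)"]
      by (simp only: distinct_append distinct_take) blast
    ultimately show ?thesis unfolding rainbow_path_def by simp
  qed
  moreover have "path_length q \<le> path_length p" unfolding path_length_def q_def by simp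
  ultimately show ?thesis by blast
qed

lemma path_edges_snoc: "p \<noteq> [] \<Longrightarrow> path_edges (p @ [y]) = path_edges p @ [(last p, y)]"
  unfolding path_edges_def by (induction p rule: induct_list012) auto

lemma length_path_edges: "length (path_edges p) = path_length p"
  unfolding path_edges_def path_length_def by simp

lemma ext_path:
  assumes dg: "digraph V E" and pc: "proper_total_colouring V E cv ce" and rv: "rainbow_vertex_set V cv"
    and p: "is_path V E p u x" and rb: "rainbow_path cv ce p" and e: "(x, y) \<in> E" and ny: "y \<notin> set p"
    and c1: "cv y \<notin> ce ` set (path_edges p)"
    and c2: "ce (x, y) \<notin> cv ` set (butlast p)"
    and c3: "ce (x, y) \<notin> ce ` set (path_edges p)"
  shows "is_path V E (p @ [y]) u y \<and> rainbow_path cv ce (p @ [y]) \<and> path_length (p @ [y]) = Suc (path_length p)"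
proof -
  have pne: "p \<noteq> []" and lx: "last p = x" and sp: "set p \<subseteq> V" using p unfolding is_path_def by auto
  have yV: "y \<in> V" using dg e unfolding digraph_def by auto
  have "is_path V E (p @ [y]) u y"
    using p yV ny e unfolding is_path_def
    apply (auto simp: nth_append)
    subgoal for i
      apply (subgoal_tac "i = length p - 1")
       apply (simp add: last_conv_nth)
      apply linarith
      done
    done
  moreover have "rainbow_path cv ce (p @ [y])"
  proof -
    have sp2: "set p = insert x (set (butlast p))"
    proof -
      have "set p = set (butlast p @ [last p])" using pne by simp
      then show ?thesis using lx by simp
    qed
    have i1: "cv y \<notin> cv ` set p" using rv sp yV ny unfolding rainbow_vertex_set_def inj_on_def by blast
    have pr: "ce (x, y) \<noteq> cv x" "ce (x, y) \<noteq> cv y" using pc e unfolding proper_total_colouring_def by auto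
    have i2: "ce (x, y) \<notin> cv ` set p" using sp2 c2 pr by auto
    have d: "distinct (map cv p @ map ce (path_edges p))" using rb unfolding rainbow_path_def .
    have "map cv (p @ [y]) @ map ce (path_edges (p @ [y])) = map cv p @ [cv y] @ map ce (path_edges p) @ [ce (x, y)]"
      unfolding path_edges_snoc[OF pne] lx by simp
    moreover have "distinct (map cv p @ [cv y] @ map ce (path_edges p) @ [ce (x, y)])"
      using d i1 i2 pr c1 c3 by (simp add: distinct_append)
    ultimately show ?thesis unfolding rainbow_path_def by simp
  qed
  moreover have "path_length (p @ [y]) = Suc (path_length p)" using pne unfolding path_length_def by simp
  ultimately show ?thesis by blast
qed

lemma out_bound:
  assumes dg: "digraph V E" and pc: "proper_total_colouring V E cv ce" and rv: "rainbow_vertex_set V cv"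
    and p: "is_path V E p v x" and rb: "rainbow_path cv ce p" and n: "path_length p \<le> i"
    and B: "B = (\<lambda>j. {z \<in> V. rb_dist V E cv ce v z \<le> enat j})"
  shows "card {y. (x, y) \<in> E} \<le> card {y \<in> B i. (x, y) \<in> E} + card (B (Suc i) - B i) + 3 * i"
proof -
  define es where "es = path_edges p"
  define S1 where "S1 = {y \<in> V. cv y \<in> ce ` set es}"
  define S2 where "S2 = {y. (x, y) \<in> E \<and> ce (x, y) \<in> cv ` set (butlast p)}"
  define S3 where "S3 = {y. (x, y) \<in> E \<and> ce (x, y) \<in> ce ` set es}"
  have finV: "finite V" and EV: "E \<subseteq> V \<times> V" using dg unfolding digraph_def by auto
  have lx: "last p = x" and pne: "p \<noteq> []" using p unfolding is_path_def by auto
  have les: "length es = path_length p" unfolding es_def by (rule length_path_edges)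
  have injx: "inj_on (\<lambda>y. ce (x, y)) {y. (x, y) \<in> E}"
    using pc unfolding proper_total_colouring_def inj_on_def by blast
  have fout: "finite {y. (x, y) \<in> E}" using finV EV by (auto intro: finite_subset)
  have cS1: "card S1 \<le> i"
  proof -
    have "inj_on cv S1" using rv unfolding rainbow_vertex_set_def S1_def by (auto intro: inj_on_subset)
    then have "card S1 = card (cv ` S1)" by (simp add: card_image)
    also have "\<dots> \<le> card (ce ` set es)" by (rule card_mono) (auto simp: S1_def)
    also have "\<dots> \<le> card (set es)" by (rule card_image_le) simp
    also have "\<dots> \<le> length es" by (rule card_length)
    finally show ?thesis using les n by simp
  qed
  have cS2: "card S2 \<le> i"
  proof -
    have "inj_on (\<lambda>y. ce (x, y)) S2" using injx by (rule inj_on_subset) (auto simp: S2_def)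
    then have "card S2 = card ((\<lambda>y. ce (x, y)) ` S2)" by (simp add: card_image)
    also have "\<dots> \<le> card (cv ` set (butlast p))" by (rule card_mono) (auto simp: S2_def)
    also have "\<dots> \<le> card (set (butlast p))" by (rule card_image_le) simp
    also have "\<dots> \<le> length (butlast p)" by (rule card_length)
    finally show ?thesis using n unfolding path_length_def by simp
  qed
  have cS3: "card S3 \<le> i"
  proof -
    have "inj_on (\<lambda>y. ce (x, y)) S3" using injx by (rule inj_on_subset) (auto simp: S3_def)
    then have "card S3 = card ((\<lambda>y. ce (x, y)) ` S3)" by (simp add: card_image)
    also have "\<dots> \<le> card (ce ` set es)" by (rule card_mono) (auto simp: S3_def)
    also have "\<dots> \<le> card (set es)" by (rule card_image_le) simp
    also have "\<dots> \<le> length es" by (rule card_length)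
    finally show ?thesis using les n by simp
  qed
  have cover: "{y. (x, y) \<in> E} \<subseteq> {y \<in> B i. (x, y) \<in> E} \<union> (B (Suc i) - B i) \<union> S1 \<union> S2 \<union> S3"
  proof
    fix y assume "y \<in> {y. (x, y) \<in> E}"
    then have e: "(x, y) \<in> E" by simp
    then have yV: "y \<in> V" using EV by auto
    show "y \<in> {y \<in> B i. (x, y) \<in> E} \<union> (B (Suc i) - B i) \<union> S1 \<union> S2 \<union> S3"
    proof (cases "y \<in> set p")
      case True
      obtain q where q: "is_path V E q v y" "rainbow_path cv ce q" "path_length q \<le> path_length p"
        using prefix_path[OF p rb True] by blast
      have "rb_dist V E cv ce v y \<le> enat (path_length q)" by (rule rb_dist_le_path[OF q(1,2)])
      also have "\<dots> \<le> enat i" using q(3) n by simp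
      finally show ?thesis using yV e B by simp
    next
      case False
      show ?thesis
      proof (cases "y \<in> S1 \<union> S2 \<union> S3")
        case True then show ?thesis by blast
      next
        case nb: False
        have c1: "cv y \<notin> ce ` set (path_edges p)" using nb yV unfolding S1_def es_def by auto
        have c2: "ce (x, y) \<notin> cv ` set (butlast p)" using nb e unfolding S2_def by auto
        have c3: "ce (x, y) \<notin> ce ` set (path_edges p)" using nb e unfolding S3_def es_def by auto
        have q: "is_path V E (p @ [y]) v y" "rainbow_path cv ce (p @ [y])" "path_length (p @ [y]) = Suc (path_length p)"
          using ext_path[OF dg pc rv p rb e False c1 c2 c3] by auto
        have "rb_dist V E cv ce v y \<le> enat (path_length (p @ [y]))" by (rule rb_dist_le_path[OF q(1,2)])
        also have "\<dots> \<le> enat (Suc i)" using q(3) n by simp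
        finally have "y \<in> B (Suc i)" using yV B by simp
        then show ?thesis using e by blast
      qed
    qed
  qed
  have fB: "\<And>j. finite (B j)" using finV B by simp
  have fS: "finite S1" "finite S2" "finite S3" using finV EV unfolding S1_def S2_def S3_def
    by (auto intro: finite_subset)
  have "card {y. (x, y) \<in> E} \<le> card ({y \<in> B i. (x, y) \<in> E} \<union> (B (Suc i) - B i) \<union> S1 \<union> S2 \<union> S3)"
    by (rule card_mono) (use fB fS cover in auto)
  also have "\<dots> \<le> card {y \<in> B i. (x, y) \<in> E} + card (B (Suc i) - B i) + card S1 + card S2 + card S3"
    by (meson card_Un_le order_trans add_right_mono)
  finally show ?thesis using cS1 cS2 cS3 by linarith
qed

lemma nat_quad: "real K * real K - 3 * real K + 2 \<ge> (0::real)"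
proof (cases "K \<le> 2")
  case True
  then have "K = 0 \<or> K = 1 \<or> K = 2" by auto
  then show ?thesis by auto
next
  case False
  then have "real K - 1 \<ge> 0" "real K - 2 \<ge> 0" by auto
  then have "(real K - 1) * (real K - 2) \<ge> 0" by simp
  then show ?thesis by (simp add: algebra_simps)
qed

theorem mainTheorem9:
  fixes V :: "'a set" and E :: "('a \<times> 'a) set"
    and cv :: "'a \<Rightarrow> 'c" and ce :: "'a \<times> 'a \<Rightarrow> 'c"
    and \<epsilon> :: real and v :: 'a
  assumes "\<epsilon> > 0"
    and "digraph V E"
    and "proper_total_colouring V E cv ce"
    and "rainbow_vertex_set V cv"
    and "real (card V) \<ge> 2 / \<epsilon>^2"
    and "v \<in> V"
  shows "\<exists>N \<subseteq> V. N \<noteq> {} \<and> (\<forall>u \<in> N. rb_dist_le V E cv ce v u (1 / \<epsilon>)) \<and>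
           real (min_out_degree_induced E N) \<ge>
             real (Min (out_degree E ` {x \<in> V. rb_dist_le V E cv ce v x (1 / \<epsilon>)}))
             - 2 * \<epsilon> * real (card V)"
proof -
  note epos = assms(1) and dg = assms(2) and pc = assms(3) and rv = assms(4) and nbig = assms(5) and vV = assms(6)
  define n where "n = real (card V)"
  define B where "B = (\<lambda>j. {z \<in> V. rb_dist V E cv ce v z \<le> enat j})"
  define K where "K = nat \<lfloor>1 / \<epsilon>\<rfloor>"
  define ball where "ball = {x \<in> V. rb_dist_le V E cv ce v x (1 / \<epsilon>)}"
  have finV: "finite V" using dg unfolding digraph_def by auto
  have fl: "0 \<le> \<lfloor>1 / \<epsilon>\<rfloor>" using epos by simp
  have KK: "real K = real_of_int \<lfloor>1 / \<epsilon>\<rfloor>" unfolding K_def using fl by simp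
  have K1: "real K \<le> 1 / \<epsilon>" unfolding KK by (rule of_int_floor_le)
  have K2: "1 / \<epsilon> < real K + 1" unfolding KK by (rule real_of_int_floor_add_one_gt)
  have fB: "\<And>j. finite (B j)" using finV unfolding B_def by simp
  have BV: "\<And>j. B j \<subseteq> V" unfolding B_def by auto
  have Bmono: "\<And>j. B j \<subseteq> B (Suc j)" unfolding B_def by (auto intro: order_trans)
  have vB: "v \<in> B 0"
  proof -
    have "is_path V E [v] v v" using vV unfolding is_path_def by simp
    moreover have "rainbow_path cv ce [v]" unfolding rainbow_path_def path_edges_def by simp
    ultimately have "rb_dist V E cv ce v v \<le> enat (path_length [v])" by (rule rb_dist_le_path)
    then show ?thesis using vV unfolding B_def path_length_def by (simp add: zero_enat_def)
  qed
  have Bball: "\<And>j. j \<le> K \<Longrightarrow> B j \<subseteq> ball"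
  proof
    fix j x assume j: "j \<le> K" and x: "x \<in> B j"
    then have xV: "x \<in> V" and d: "rb_dist V E cv ce v x \<le> enat j" unfolding B_def by auto
    then obtain m where m: "rb_dist V E cv ce v x = enat m" "m \<le> j" by (metis enat_ile enat_ord_simps(1))
    then have "real m \<le> 1 / \<epsilon>" using j K1 by (meson of_nat_le_iff order_trans)
    then show "x \<in> ball" using xV m unfolding ball_def rb_dist_le_def by auto
  qed
  have finball: "finite ball" using finV unfolding ball_def by simp
  have vball: "v \<in> ball" using vB Bball[of 0] by auto
  define d where "d = (\<lambda>i. card (B (Suc i) - B i))"
  have cstep: "\<And>i. real (card (B (Suc i))) = real (card (B i)) + real (d i)"
  proof -
    fix i
    have "B (Suc i) = B i \<union> (B (Suc i) - B i)" using Bmono[of i] by auto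
    then have "card (B (Suc i)) = card (B i) + card (B (Suc i) - B i)"
      by (metis card_Un_disjoint fB finite_Diff Diff_disjoint)
    then show "real (card (B (Suc i))) = real (card (B i)) + real (d i)" unfolding d_def by simp
  qed
  have npos: "n > 0"
  proof -
    have "2 / \<epsilon>^2 > 0" using epos by simp
    then show ?thesis using nbig unfolding n_def by linarith
  qed
  have ex: "\<exists>i \<le> K. real (d i) + 3 * real i \<le> 2 * \<epsilon> * n"
  proof (rule ccontr)
    assume "\<not> ?thesis"
    then have H: "\<And>i. i \<le> K \<Longrightarrow> real (d i) + 3 * real i > 2 * \<epsilon> * n" by force
    have ind: "m \<le> Suc K \<Longrightarrow> real (card (B m)) \<ge> 1 + real m * (2 * \<epsilon> * n) - 3 * (real m * (real m - 1)) / 2" for m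
    proof (induction m)
      case 0
      have "card (B 0) \<ge> 1" using vB fB[of 0] by (metis One_nat_def Suc_leI card_gt_0_iff empty_iff)
      then show ?case by simp
    next
      case (Suc m)
      then have "m \<le> K" by simp
      have h: "real (d m) + 3 * real m > 2 * \<epsilon> * n" by (rule H[OF \<open>m \<le> K\<close>])
      have ih: "real (card (B m)) \<ge> 1 + real m * (2 * \<epsilon> * n) - 3 * (real m * (real m - 1)) / 2"
        using Suc by simp
      have "real (card (B (Suc m))) = real (card (B m)) + real (d m)" by (rule cstep)
      moreover have "1 + real (Suc m) * (2 * \<epsilon> * n) - 3 * (real (Suc m) * (real (Suc m) - 1)) / 2
          = (1 + real m * (2 * \<epsilon> * n) - 3 * (real m * (real m - 1)) / 2) + (2 * \<epsilon> * n - 3 * real m)"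
        by (simp add: field_simps)
      ultimately show ?case using h ih by linarith
    qed
    have "real (card (B (Suc K))) \<le> n" unfolding n_def using card_mono[OF finV BV] by simp
    then have A0: "1 + real (Suc K) * (2 * \<epsilon> * n) - 3 * (real (Suc K) * (real (Suc K) - 1)) / 2 \<le> n"
      using ind[of "Suc K"] by linarith
    have A: "n \<ge> 1 + (real K + 1) * (2 * \<epsilon> * n) - 3 * ((real K + 1) * real K) / 2"
      using A0 by (simp add: algebra_simps)
    have "(real K + 1) * \<epsilon> > 1" using K2 epos by (simp add: field_simps)
    then have "(real K + 1) * \<epsilon> * (2 * n) > 1 * (2 * n)" using npos by (intro mult_strict_right_mono) auto
    then have A2: "(real K + 1) * (2 * \<epsilon> * n) > 2 * n" by (simp add: algebra_simps)
    have "real K * \<epsilon> \<le> 1" using K1 epos by (simp add: field_simps)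
    moreover have "real K * \<epsilon> \<ge> 0" using epos by simp
    ultimately have "(real K * \<epsilon>) * (real K * \<epsilon>) \<le> 1 * 1" by (intro mult_mono) auto
    then have k2: "real K * real K * \<epsilon>^2 \<le> 1" by (simp add: power2_eq_square algebra_simps)
    have "2 \<le> n * \<epsilon>^2" using nbig epos unfolding n_def by (simp add: field_simps)
    then have "2 * (real K * real K) * \<epsilon>^2 \<le> n * \<epsilon>^2" using k2 by linarith
    then have "2 * (real K * real K) \<le> n" using epos by simp
    moreover have "(real K + 1) * real K = real K * real K + real K" by (simp add: algebra_simps)
    ultimately show False using A A2 nat_quad[of K] by linarith
  qed
  then obtain i where i: "i \<le> K" "real (d i) + 3 * real i \<le> 2 * \<epsilon> * n" by blast
  define N where "N = B i"
  have "v \<in> N" using vB unfolding N_def B_def by (auto intro: order_trans)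
  then have Nne: "N \<noteq> {}" by blast
  have fN: "finite N" unfolding N_def by (rule fB)
  obtain x0 where x0: "x0 \<in> N" "min_out_degree_induced E N = card {y \<in> N. (x0, y) \<in> E}"
  proof -
    have "Min ((\<lambda>x. card {y \<in> N. (x, y) \<in> E}) ` N) \<in> (\<lambda>x. card {y \<in> N. (x, y) \<in> E}) ` N"
      using fN Nne by (intro Min_in) auto
    then show ?thesis using that unfolding min_out_degree_induced_def by auto
  qed
  obtain p where p: "is_path V E p v x0" "rainbow_path cv ce p" "path_length p \<le> i"
    using x0(1) rb_dist_obtain[of V E cv ce v x0 i] unfolding N_def B_def by auto
  have ob: "card {y. (x0, y) \<in> E} \<le> card {y \<in> B i. (x0, y) \<in> E} + card (B (Suc i) - B i) + 3 * i"
    by (rule out_bound[OF dg pc rv p B_def])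
  have "Min (out_degree E ` ball) \<le> out_degree E x0"
    using finball x0(1) Bball[OF i(1)] unfolding N_def by (auto intro: Min_le)
  then have "real (Min (out_degree E ` ball)) \<le> real (min_out_degree_induced E N) + real (d i) + 3 * real i"
    using ob x0(2) unfolding out_degree_def d_def N_def by linarith
  then have "real (min_out_degree_induced E N) \<ge> real (Min (out_degree E ` ball)) - 2 * \<epsilon> * real (card V)"
    using i(2) unfolding n_def by linarith
  moreover have "N \<subseteq> V" unfolding N_def by (rule BV)
  moreover have "\<forall>u \<in> N. rb_dist_le V E cv ce v u (1 / \<epsilon>)" using Bball[OF i(1)] unfolding N_def ball_def by auto
  ultimately show ?thesis using Nne unfolding ball_def by blast
qed

end
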